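(* Let $n\ge2$, let $\alpha_1,\dots,\alpha_n>0$, and let $A$ be the symmetric $n\times n$ real matrix with $A_{ii}=1$, $A_{i,i+1}=A_{i+1,i}=-\alpha_i$ for $1\le i\le n-1$, $A_{1,n}=A_{n,1}=-\alpha_n$, and all other entries $0$. Let $\lambda_{\min}$ be the smallest eigenvalue of $A$ and $M=\max\{\alpha_i+\alpha_{i+1}: i=1,\dots,n\}$ (indices modulo $n$). Then: (i) $\lambda_{\min}\ge1-M$; in particular $A$ is positive definite if $M<1$; (ii) $\lambda_{\min}=1-M$ if and only if $\alpha_i=\alpha_{i+2}$ for all $i$ (modulo $n$); (iii) if $n\ge4$, $\alpha_1=\dots=\alpha_{n-1}=\alpha$ and $\alpha_n=\beta$, then $\lambda_{\min}\ge\lambda$ for every real $\lambda$ with $\lambda\le1-2\alpha$, $\lambda<1-\beta$ and $\alpha^2\le(1-\alpha-\lambda)(1-\beta-\lambda)$; in particular $A$ is positive definite if $\alpha<\tfrac12$, $\beta<1$ and $\alpha^2<(1-\alpha)(1-\beta)$. *)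

theory Defs
  imports "Jordan_Normal_Form.Char_Poly"
begin

text \<open>Cyclic tridiagonal matrix, 0-based indices: alpha i (i < n) is the paper's alpha_(i+1).
  For n = 2 both off-diagonal contributions add up.\<close>
definition cyc_mat :: "nat \<Rightarrow> (nat \<Rightarrow> real) \<Rightarrow> real mat" where
  "cyc_mat n alpha = mat n n (\<lambda>(i, j).
      (if i = j then 1 else 0)
      - (if j = Suc i mod n then alpha i else 0)
      - (if i = Suc j mod n then alpha j else 0))"

definition lambda_min :: "real mat \<Rightarrow> real" where
  "lambda_min A = Min {k. eigenvalue A k}"

definition pos_def_mat :: "real mat \<Rightarrow> bool" where
  "pos_def_mat A \<longleftrightarrow> A \<in> carrier_mat (dim_row A) (dim_row A) \<and>
     (\<forall>v \<in> carrier_vec (dim_row A). v \<noteq> 0\<^sub>v (dim_row A) \<longrightarrow> v \<bullet> (A *\<^sub>v v) > 0)"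

end

theory Submission
  imports Defs
begin


definition nx :: "nat \<Rightarrow> nat \<Rightarrow> nat" where "nx n i = Suc i mod n"
definition pv :: "nat \<Rightarrow> nat \<Rightarrow> nat" where "pv n i = (if i = 0 then n - 1 else i - 1)"

lemma nx_eq: "i < n \<Longrightarrow> nx n i = (if Suc i = n then 0 else Suc i)"
  unfolding nx_def by auto

lemma nx_lt: "i < n \<Longrightarrow> nx n i < n" unfolding nx_def by auto
lemma pv_lt: "i < n \<Longrightarrow> pv n i < n" unfolding pv_def by auto
lemma pv_nx: "i < n \<Longrightarrow> pv n (nx n i) = i" by (auto simp: nx_eq pv_def)
lemma nx_pv: "i < n \<Longrightarrow> nx n (pv n i) = i" by (auto simp: nx_eq pv_lt pv_def)
lemma nx_iff: "i < n \<Longrightarrow> j < n \<Longrightarrow> (i = Suc j mod n) \<longleftrightarrow> (j = pv n i)"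
  using pv_nx nx_pv unfolding nx_def[symmetric] by metis

lemma sum_nx: "(\<Sum>i<n. f (nx n i)) = (\<Sum>i<n. (f i :: real))"
  by (rule sum.reindex_bij_witness[of _ "pv n" "nx n"]) (auto simp: pv_nx nx_pv nx_lt pv_lt)

lemma cyc_carrier: "cyc_mat n alpha \<in> carrier_mat n n" unfolding cyc_mat_def by simp

lemma cyc_sym: "i < n \<Longrightarrow> j < n \<Longrightarrow> cyc_mat n alpha $$ (i,j) = cyc_mat n alpha $$ (j,i)"
  unfolding cyc_mat_def by auto

lemma cyc_mult: assumes v: "v \<in> carrier_vec n" and i: "i < n"
  shows "(cyc_mat n alpha *\<^sub>v v) $ i = v$i - alpha i * v$(nx n i) - alpha (pv n i) * v$(pv n i)"
proof -
  have "(cyc_mat n alpha *\<^sub>v v) $ i = (\<Sum>j<n. ((if i = j then 1 else 0)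
      - (if j = Suc i mod n then alpha i else 0)
      - (if i = Suc j mod n then alpha j else 0)) * v$j)"
    using v i by (auto simp: cyc_mat_def scalar_prod_def lessThan_atLeast0 intro!: sum.cong)
  also have "\<dots> = (\<Sum>j<n. (if i = j then v$j else 0)
      - (if j = nx n i then alpha i * v$j else 0)
      - (if j = pv n i then alpha (pv n i) * v$j else 0))"
  proof (intro sum.cong refl)
    fix j assume j: "j \<in> {..<n}"
    have c1: "(i = Suc j mod n) = (j = pv n i)" using nx_iff i j by auto
    have c2: "(j = Suc i mod n) = (j = nx n i)" by (simp add: nx_def)
    show "((if i = j then 1 else 0) - (if j = Suc i mod n then alpha i else 0)
      - (if i = Suc j mod n then alpha j else 0)) * v$j = (if i = j then v$j else 0)
      - (if j = nx n i then alpha i * v$j else 0)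
      - (if j = pv n i then alpha (pv n i) * v$j else 0)"
      unfolding c1 c2 by (simp add: left_diff_distrib)
  qed
  also have "\<dots> = v$i - alpha i * v$(nx n i) - alpha (pv n i) * v$(pv n i)"
    unfolding sum_subtractf using i by (simp add: sum.delta sum.delta' nx_lt pv_lt)
  finally show ?thesis .
qed

definition sq :: "nat \<Rightarrow> real vec \<Rightarrow> real" where "sq n v = (\<Sum>i<n. (v$i)^2)"

lemma Q_eq: assumes v: "v \<in> carrier_vec n"
  shows "v \<bullet> (cyc_mat n alpha *\<^sub>v v) = sq n v - 2 * (\<Sum>i<n. alpha i * v$i * v$(nx n i))"
proof -
  have "v \<bullet> (cyc_mat n alpha *\<^sub>v v) = (\<Sum>i<n. v$i * (cyc_mat n alpha *\<^sub>v v)$i)"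
    using v cyc_carrier[of n alpha] by (simp add: scalar_prod_def lessThan_atLeast0)
  also have "\<dots> = (\<Sum>i<n. (v$i)^2 - alpha i * v$i * v$(nx n i) - alpha (pv n i) * v$(pv n i) * v$i)"
    by (intro sum.cong refl) (simp add: cyc_mult[OF v] algebra_simps power2_eq_square)
  finally have e: "v \<bullet> (cyc_mat n alpha *\<^sub>v v) = (\<Sum>i<n. (v$i)^2 - alpha i * v$i * v$(nx n i) - alpha (pv n i) * v$(pv n i) * v$i)" .
  have "(\<Sum>i<n. alpha (pv n i) * v$(pv n i) * v$i) = (\<Sum>i<n. alpha (pv n (nx n i)) * v$(pv n (nx n i)) * v$(nx n i))"
    by (rule sum_nx[symmetric])
  also have "\<dots> = (\<Sum>i<n. alpha i * v$i * v$(nx n i))"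
    by (intro sum.cong refl) (simp add: pv_nx)
  finally have h: "(\<Sum>i<n. alpha (pv n i) * v$(pv n i) * v$i) = (\<Sum>i<n. alpha i * v$i * v$(nx n i))" .
  show ?thesis unfolding e sum_subtractf h by (simp add: sq_def)
qed

lemma sq_pos: assumes v: "v \<in> carrier_vec n" "v \<noteq> 0\<^sub>v n" shows "sq n v > 0"
proof -
  obtain i where i: "i < n" "v$i \<noteq> 0" using v by (metis dim_vec eq_vecI index_zero_vec(1,2) carrier_vecD)
  show ?thesis unfolding sq_def by (rule sum_pos2[of _ i]) (use i in auto)
qed

lemma sq_nonneg: "sq n v \<ge> 0" unfolding sq_def by (simp add: sum_nonneg)

lemma Q_gen: assumes v: "v \<in> carrier_vec n"
  and ab: "\<And>i x y. i < n \<Longrightarrow> 2 * alpha i * x * y \<le> beta i * x^2 + gamma i * y^2"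
  and bg: "\<And>i. i < n \<Longrightarrow> beta i + gamma (pv n i) \<le> 1 - l"
  shows "v \<bullet> (cyc_mat n alpha *\<^sub>v v) \<ge> l * sq n v"
proof -
  have "2 * (\<Sum>i<n. alpha i * v$i * v$(nx n i)) = (\<Sum>i<n. 2 * alpha i * v$i * v$(nx n i))"
    by (simp add: sum_distrib_left mult.assoc)
  also have "\<dots> \<le> (\<Sum>i<n. beta i * (v$i)^2 + gamma i * (v$(nx n i))^2)"
    by (rule sum_mono) (use ab in auto)
  also have "\<dots> = (\<Sum>i<n. beta i * (v$i)^2) + (\<Sum>i<n. gamma (pv n (nx n i)) * (v$(nx n i))^2)"
    by (simp add: sum.distrib pv_nx)
  also have "(\<Sum>i<n. gamma (pv n (nx n i)) * (v$(nx n i))^2) = (\<Sum>i<n. gamma (pv n i) * (v$i)^2)"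
    by (rule sum_nx)
  also have "(\<Sum>i<n. beta i * (v$i)^2) + \<dots> = (\<Sum>i<n. (beta i + gamma (pv n i)) * (v$i)^2)"
    by (simp add: sum.distrib algebra_simps)
  also have "\<dots> \<le> (\<Sum>i<n. (1 - l) * (v$i)^2)"
    by (rule sum_mono) (use bg in \<open>auto intro: mult_right_mono\<close>)
  also have "\<dots> = (1 - l) * sq n v" by (simp add: sq_def sum_distrib_left)
  finally show ?thesis unfolding Q_eq[OF v] by (simp add: algebra_simps)
qed

lemma Q_exact: assumes v: "v \<in> carrier_vec n"
  shows "v \<bullet> (cyc_mat n alpha *\<^sub>v v) = sq n v - (\<Sum>i<n. (alpha i + alpha (pv n i)) * (v$i)^2)
     + (\<Sum>i<n. alpha i * (v$i - v$(nx n i))^2)"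
proof -
  have "(\<Sum>i<n. alpha i * (v$i - v$(nx n i))^2) = (\<Sum>i<n. alpha i * (v$i)^2)
     + (\<Sum>i<n. alpha (pv n (nx n i)) * (v$(nx n i))^2) - 2 * (\<Sum>i<n. alpha i * v$i * v$(nx n i))"
    by (simp add: sum.distrib sum_subtractf sum_distrib_left pv_nx power2_eq_square algebra_simps)
  also have "(\<Sum>i<n. alpha (pv n (nx n i)) * (v$(nx n i))^2) = (\<Sum>i<n. alpha (pv n i) * (v$i)^2)"
    by (rule sum_nx)
  finally have h: "(\<Sum>i<n. alpha i * (v$i - v$(nx n i))^2) = (\<Sum>i<n. (alpha i + alpha (pv n i)) * (v$i)^2)
     - 2 * (\<Sum>i<n. alpha i * v$i * v$(nx n i))"
    by (simp add: sum.distrib algebra_simps)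
  show ?thesis unfolding Q_eq[OF v] h by simp
qed

lemma eig_ge: assumes e: "eigenvalue (cyc_mat n alpha) k"
  and b: "\<And>v. v \<in> carrier_vec n \<Longrightarrow> v \<noteq> 0\<^sub>v n \<Longrightarrow> v \<bullet> (cyc_mat n alpha *\<^sub>v v) \<ge> l * sq n v"
  shows "k \<ge> l"
proof -
  obtain v where v: "v \<in> carrier_vec n" "v \<noteq> 0\<^sub>v n" "cyc_mat n alpha *\<^sub>v v = k \<cdot>\<^sub>v v"
    using e cyc_carrier[of n alpha] unfolding eigenvalue_def eigenvector_def by auto
  have "v \<bullet> (cyc_mat n alpha *\<^sub>v v) = k * sq n v"
    using v(1) unfolding v(3) by (simp add: sq_def scalar_prod_def lessThan_atLeast0 sum_distrib_left power2_eq_square algebra_simps)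
  with b[OF v(1,2)] sq_pos[OF v(1,2)] show ?thesis by (metis mult_le_cancel_right not_less)
qed



lemma sym_real_eigenvalue_exists:
  fixes A :: "real mat"
  assumes A: "A \<in> carrier_mat n n" and n: "n > 0"
    and sym: "\<And>i j. i<n \<Longrightarrow> j<n \<Longrightarrow> A $$ (i,j) = A $$ (j,i)"
  shows "\<exists>k. eigenvalue A k"
proof -
  let ?B = "map_mat complex_of_real A"
  have B: "?B \<in> carrier_mat n n" using A by simp
  have cp: "char_poly ?B = map_poly complex_of_real (char_poly A)" by (rule of_real_hom.char_poly_hom[OF A])
  have "degree (char_poly ?B) = n" using degree_monic_char_poly[OF B] by simp
  then have "\<not> constant (poly (char_poly ?B))" using n by (simp add: constant_degree)
  then obtain z where z: "poly (char_poly ?B) z = 0" using fundamental_theorem_of_algebra by blast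
  then have "eigenvalue ?B z" using eigenvalue_root_char_poly[OF B] by simp
  then obtain w where w: "w \<in> carrier_vec n" "w \<noteq> 0\<^sub>v n" "?B *\<^sub>v w = z \<cdot>\<^sub>v w"
    unfolding eigenvalue_def eigenvector_def using B by auto
  define S where "S = (\<Sum>i<n. \<Sum>j<n. cnj (w$i) * complex_of_real (A$$(i,j)) * w$j)"
  have Bw: "(\<Sum>j<n. complex_of_real (A$$(i,j)) * w$j) = z * w$i" if i: "i<n" for i
  proof -
    have "(?B *\<^sub>v w)$i = (\<Sum>j<n. complex_of_real (A$$(i,j)) * w$j)"
      using A w(1) i by (auto simp: scalar_prod_def lessThan_atLeast0 intro!: sum.cong)
    then show ?thesis using w(3) i w(1) by simp
  qed
  have S1: "S = z * (\<Sum>i<n. cnj (w$i) * w$i)"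
  proof -
    have "S = (\<Sum>i<n. cnj (w$i) * (\<Sum>j<n. complex_of_real (A$$(i,j)) * w$j))"
      unfolding S_def by (simp add: sum_distrib_left mult.assoc)
    also have "\<dots> = (\<Sum>i<n. cnj (w$i) * (z * w$i))" using Bw by simp
    finally show ?thesis by (simp add: sum_distrib_left algebra_simps)
  qed
  have S2: "cnj S = S"
  proof -
    have "cnj S = (\<Sum>i<n. \<Sum>j<n. w$i * complex_of_real (A$$(i,j)) * cnj (w$j))"
      unfolding S_def by (simp add: cnj_sum)
    also have "\<dots> = (\<Sum>j<n. \<Sum>i<n. w$i * complex_of_real (A$$(i,j)) * cnj (w$j))"
      by (rule sum.swap)
    also have "\<dots> = S" unfolding S_def
      by (intro sum.cong refl) (simp add: sym mult.commute mult.left_commute)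
    finally show ?thesis .
  qed
  define r where "r = (\<Sum>i<n. (cmod (w$i))^2)"
  have N: "(\<Sum>i<n. cnj (w$i) * w$i) = complex_of_real r"
  proof -
    have "(\<Sum>i<n. cnj (w$i) * w$i) = (\<Sum>i<n. complex_of_real ((cmod (w$i))^2))"
      by (intro sum.cong refl) (metis complex_norm_square mult.commute)
    also have "\<dots> = complex_of_real r" unfolding r_def by (rule of_real_sum[symmetric])
    finally show ?thesis .
  qed
  obtain i where i: "i < n" "w$i \<noteq> 0" using w(1,2) by (metis dim_vec eq_vecI index_zero_vec(1,2) carrier_vecD)
  have rpos: "r > 0" unfolding r_def
  proof (rule sum_pos2[of _ i])
  qed (use i in auto)
  have "z * complex_of_real r = cnj z * complex_of_real r"
    using S1 S2 N by (metis complex_cnj_complex_of_real complex_cnj_mult)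
  then have "z = cnj z" using rpos by simp
  then have "Im z = Im (cnj z)" by simp
  then have "Im z = 0" by simp
  then have zr: "z = complex_of_real (Re z)" by (simp add: complex_eq_iff)
  have "complex_of_real (poly (char_poly A) (Re z)) = 0"
    using z cp zr by (metis of_real_hom.poly_map_poly)
  then have "poly (char_poly A) (Re z) = 0" by simp
  then show ?thesis using eigenvalue_root_char_poly[OF A] by blast
qed


lemma iii_bound:
  fixes alpha :: "nat \<Rightarrow> real"
  assumes n4: "n \<ge> 4" and ha: "\<And>i. i < n - 1 \<Longrightarrow> alpha i = a" and hb: "alpha (n - 1) = b"
    and a0: "a > 0" and b0: "b > 0"
    and l1: "l \<le> 1 - 2 * a" and l2: "a^2 \<le> (1 - a - l) * (1 - b - l)"
    and v: "v \<in> carrier_vec n"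
  shows "v \<bullet> (cyc_mat n alpha *\<^sub>v v) \<ge> l * sq n v"
proof -
  define c where "c = 1 - l - a"
  have c0: "c > 0" using l1 a0 unfolding c_def by simp
  have ca: "a^2 / c + b \<le> 1 - l"
  proof -
    have "a^2 \<le> (1 - b - l) * c" using l2 unfolding c_def by (simp add: mult.commute diff_diff_eq add.commute)
    then have "a^2 / c \<le> 1 - b - l" using pos_divide_le_eq[OF c0] by simp
    then show ?thesis by simp
  qed
  define beta where "beta i = (if i = 0 then a^2/c else if i = n-2 then c else if i = n-1 then b else a)" for i
  define gamma where "gamma i = (if i = 0 then c else if i = n-2 then a^2/c else if i = n-1 then b else a)" for i
  have amgm1: "2 * a * x * y \<le> a^2/c * x^2 + c * y^2" for x y
  proof -
    have "0 \<le> (a * x - c * y)^2 / c" using c0 by simp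
    also have "\<dots> = a^2/c * x^2 + c * y^2 - 2 * a * x * y"
      using c0 by (simp add: power2_eq_square field_simps)
    finally show ?thesis by simp
  qed
  have amgm2: "2 * t * x * y \<le> t * x^2 + t * y^2" if "t \<ge> 0" for t x y :: real
  proof -
    have "0 \<le> t * (x - y)^2" using that by simp
    then show ?thesis by (simp add: power2_eq_square algebra_simps)
  qed
  have nf: "n - 1 \<noteq> n - 2" "n - 2 \<noteq> 0" "n - 1 \<noteq> 0" "(1::nat) \<noteq> n - 2" "(1::nat) \<noteq> n - 1"
    "n - 3 \<noteq> 0" "n - 3 \<noteq> n - 2" "n - 3 \<noteq> n - 1" "n - 2 < n - 1"
    using n4 by auto
  show ?thesis
  proof (rule Q_gen[OF v, of alpha beta gamma])
    fix i x y assume i: "i < n"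
    show "2 * alpha i * x * y \<le> beta i * x^2 + gamma i * y^2"
    proof -
      consider "i = 0" | "i = n - 2" | "i = n - 1" | "i \<noteq> 0 \<and> i \<noteq> n - 2 \<and> i \<noteq> n - 1" by blast
      then show ?thesis
      proof cases
        case 1 then show ?thesis using n4 nf ha[of 0] amgm1 by (simp add: beta_def gamma_def)
      next
        case 2 then show ?thesis using n4 nf ha[of "n-2"] amgm1[of y x]
          by (simp add: beta_def gamma_def algebra_simps)
      next
        case 3 then show ?thesis using n4 nf hb amgm2[of b] b0 by (simp add: beta_def gamma_def)
      next
        case 4 then have "i < n - 1" using i by auto
        then show ?thesis using 4 n4 nf i ha[of i] amgm2[of a] a0 by (simp add: beta_def gamma_def)
      qed
    qed
  next
    fix i assume i: "i < n"
    consider "i = 0" | "i = 1" | "i = n - 2" | "i = n - 1" | "1 < i \<and> i < n - 2" using i by linarith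
    then show "beta i + gamma (pv n i) \<le> 1 - l"
    proof cases
      case 1
      have p: "pv n i = n - 1" using 1 by (simp add: pv_def)
      have "beta i = a^2/c" using 1 by (simp add: beta_def)
      moreover have "gamma (n - 1) = b" using nf by (simp add: gamma_def)
      ultimately show ?thesis unfolding p using ca by simp
    next
      case 2
      have p: "pv n i = 0" using 2 by (simp add: pv_def)
      have "beta i = a" using 2 nf by (simp add: beta_def)
      moreover have "gamma 0 = c" by (simp add: gamma_def)
      ultimately show ?thesis unfolding p c_def by simp
    next
      case 3
      have p: "pv n i = n - 3" using 3 n4 by (simp add: pv_def)
      have "beta i = c" using 3 nf by (simp add: beta_def)
      moreover have "gamma (n - 3) = a" using nf unfolding gamma_def by presburger
      ultimately show ?thesis unfolding p c_def by simp
    next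
      case 4
      have p: "pv n i = n - 2" using 4 n4 by (simp add: pv_def)
      have "beta i = b" using 4 nf by (simp add: beta_def)
      moreover have "gamma (n - 2) = a^2/c" using nf by (simp add: gamma_def)
      ultimately show ?thesis unfolding p using ca by simp
    next
      case 5
      have p: "pv n i = i - 1" using 5 by (simp add: pv_def)
      have q: "i - 1 \<noteq> 0" "i - 1 \<noteq> n - 2" "i - 1 \<noteq> n - 1" "i \<noteq> 0" "i \<noteq> n - 2" "i \<noteq> n - 1" using 5 by auto
      have "beta i = a" using q unfolding beta_def by presburger
      moreover have "gamma (i - 1) = a" using q unfolding gamma_def by presburger
      ultimately show ?thesis unfolding p using l1 by simp
    qed
  qed
qed



theorem mainTheorem18:
  fixes n :: nat and alpha :: "nat \<Rightarrow> real"
  assumes n2: "n \<ge> 2"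
    and pos: "\<And>i. i < n \<Longrightarrow> alpha i > 0"
  defines "M \<equiv> Max {alpha i + alpha (Suc i mod n) | i. i < n}"
  shows "lambda_min (cyc_mat n alpha) \<ge> 1 - M
    \<and> (M < 1 \<longrightarrow> pos_def_mat (cyc_mat n alpha))
    \<and> (lambda_min (cyc_mat n alpha) = 1 - M \<longleftrightarrow> (\<forall>i < n. alpha i = alpha ((i + 2) mod n)))
    \<and> (\<forall>a b. n \<ge> 4 \<and> (\<forall>i < n - 1. alpha i = a) \<and> alpha (n - 1) = b \<longrightarrow>
          (\<forall>l::real. l \<le> 1 - 2 * a \<and> l < 1 - b \<and> a\<^sup>2 \<le> (1 - a - l) * (1 - b - l)
               \<longrightarrow> lambda_min (cyc_mat n alpha) \<ge> l)
        \<and> (a < 1/2 \<and> b < 1 \<and> a\<^sup>2 < (1 - a) * (1 - b) \<longrightarrow> pos_def_mat (cyc_mat n alpha)))"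
proof -
  let ?A = "cyc_mat n alpha"
  define E where "E = {k. eigenvalue ?A k}"
  have A: "?A \<in> carrier_mat n n" by (rule cyc_carrier)
  have dimA: "dim_row ?A = n" using A by simp
  have fin: "finite E"
  proof -
    have "char_poly ?A \<noteq> 0" using degree_monic_char_poly[OF A] by auto
    then have "finite {k. poly (char_poly ?A) k = 0}" by (rule poly_roots_finite)
    moreover have "E = {k. poly (char_poly ?A) k = 0}" by (auto simp: E_def eigenvalue_root_char_poly[OF A])
    ultimately show ?thesis by simp
  qed
  have ne: "E \<noteq> {}"
    using sym_real_eigenvalue_exists[OF A] n2 cyc_sym[of _ n _ alpha] unfolding E_def by auto
  have lm: "lambda_min ?A = Min E" by (simp add: lambda_min_def E_def)
  have lmE: "lambda_min ?A \<in> E" unfolding lm using fin ne by (rule Min_in)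
  have lm_ge: "lambda_min ?A \<ge> l" if "\<And>k. k \<in> E \<Longrightarrow> k \<ge> l" for l
    using that lmE by blast
  have Mset: "{alpha i + alpha (Suc i mod n) | i. i < n} = (\<lambda>i. alpha i + alpha (nx n i)) ` {..<n}"
    by (auto simp: nx_def)
  have Mfin: "finite {alpha i + alpha (Suc i mod n) | i. i < n}" unfolding Mset by simp
  have Mge: "alpha i + alpha (nx n i) \<le> M" if "i < n" for i
    unfolding M_def by (rule Max_ge[OF Mfin]) (use that in \<open>auto simp: nx_def\<close>)
  have Mge': "alpha i + alpha (pv n i) \<le> M" if "i < n" for i
    using Mge[OF pv_lt[OF that]] nx_pv[OF that] by simp
  have Mex: "\<exists>i<n. M = alpha i + alpha (nx n i)"
  proof -
    have "M \<in> {alpha i + alpha (Suc i mod n) | i. i < n}" unfolding M_def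
      by (rule Max_in[OF Mfin]) (use n2 in \<open>auto intro!: exI[of _ 0]\<close>)
    then show ?thesis by (auto simp: nx_def)
  qed
  have B1: "v \<bullet> (?A *\<^sub>v v) \<ge> (1 - M) * sq n v + (\<Sum>i<n. alpha i * (v$i - v$(nx n i))^2)"
    if v: "v \<in> carrier_vec n" for v
  proof -
    have "(\<Sum>i<n. (alpha i + alpha (pv n i)) * (v$i)^2) \<le> (\<Sum>i<n. M * (v$i)^2)"
      by (rule sum_mono) (use Mge' in \<open>auto intro: mult_right_mono\<close>)
    also have "\<dots> = M * sq n v" by (simp add: sq_def sum_distrib_left)
    finally show ?thesis unfolding Q_exact[OF v] by (simp add: algebra_simps)
  qed
  have D0: "(\<Sum>i<n. alpha i * (v$i - v$(nx n i))^2) \<ge> 0" for v :: "real vec"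
  proof (rule sum_nonneg)
    fix x assume "x \<in> {..<n}"
    then have "alpha x \<ge> 0" using pos[of x] by simp
    then show "0 \<le> alpha x * (v$x - v$(nx n x))^2" by simp
  qed
  have QM: "v \<bullet> (?A *\<^sub>v v) \<ge> (1 - M) * sq n v" if "v \<in> carrier_vec n" for v
    using B1[OF that] D0[of v] by linarith
  have P1: "lambda_min ?A \<ge> 1 - M"
    by (rule lm_ge, rule eig_ge[of n alpha], unfold E_def, auto intro: QM)
  have posdef: "pos_def_mat ?A" if l0: "l > 0" and b: "\<And>v. v \<in> carrier_vec n \<Longrightarrow> v \<bullet> (?A *\<^sub>v v) \<ge> l * sq n v" for l
    unfolding pos_def_mat_def dimA
  proof (intro conjI A ballI impI)
    fix v :: "real vec" assume v: "v \<in> carrier_vec n" "v \<noteq> 0\<^sub>v n"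
    have "0 < l * sq n v" using l0 sq_pos[OF v] by simp
    also have "\<dots> \<le> v \<bullet> (?A *\<^sub>v v)" by (rule b[OF v(1)])
    finally show "v \<bullet> (?A *\<^sub>v v) > 0" .
  qed
  have P2: "M < 1 \<longrightarrow> pos_def_mat ?A"
    using posdef[of "1 - M"] QM by auto
  have P3: "lambda_min ?A = 1 - M \<longleftrightarrow> (\<forall>i < n. alpha i = alpha ((i + 2) mod n))"
  proof
    assume h: "lambda_min ?A = 1 - M"
    then have "eigenvalue ?A (1 - M)" using lmE unfolding E_def by simp
    then obtain v where v: "v \<in> carrier_vec n" "v \<noteq> 0\<^sub>v n" "?A *\<^sub>v v = (1 - M) \<cdot>\<^sub>v v"
      using A unfolding eigenvalue_def eigenvector_def by auto
    have "v \<bullet> (?A *\<^sub>v v) = (1 - M) * sq n v"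
      using v(1) unfolding v(3) by (simp add: sq_def scalar_prod_def lessThan_atLeast0 sum_distrib_left power2_eq_square algebra_simps)
    then have s0: "(\<Sum>i<n. alpha i * (v$i - v$(nx n i))^2) = 0" using B1[OF v(1)] D0[of v] by linarith
    have nn: "0 \<le> alpha x * (v$x - v$(nx n x))^2" if "x \<in> {..<n}" for x
    proof -
      have "alpha x \<ge> 0" using pos[of x] that by simp
      then show ?thesis by simp
    qed
    have "\<forall>i\<in>{..<n}. alpha i * (v$i - v$(nx n i))^2 = 0"
      using sum_nonneg_eq_0_iff[of "{..<n}" "\<lambda>i. alpha i * (v$i - v$(nx n i))^2"] nn s0 by simp
    then have eqn: "v$(nx n i) = v$i" if "i < n" for i
    proof -
      have "alpha i * (v$i - v$(nx n i))^2 = 0" using \<open>\<forall>i\<in>{..<n}. _\<close> that by blast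
      moreover have "alpha i \<noteq> 0" using pos[OF that] by simp
      ultimately show ?thesis by simp
    qed
    have const: "v$i = v$0" if "i < n" for i
      using that
    proof (induction i)
      case (Suc i)
      then have "v$(nx n i) = v$i" using eqn by simp
      moreover have "nx n i = Suc i" using Suc.prems by (simp add: nx_eq)
      ultimately show ?case using Suc by simp
    qed simp
    have c0: "v$0 \<noteq> 0"
    proof
      assume "v$0 = 0"
      have "v = 0\<^sub>v n"
      proof (rule eq_vecI)
        fix j assume "j < dim_vec (0\<^sub>v n :: real vec)"
        then have j: "j < n" by simp
        show "v $ j = 0\<^sub>v n $ j" using const[OF j] j \<open>v$0 = 0\<close> by simp
      qed (use v(1) in simp)
      with v(2) show False by simp
    qed
    have sM: "alpha i + alpha (pv n i) = M" if i: "i < n" for i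
    proof -
      have "(?A *\<^sub>v v)$i = (1 - M) * v$i" using v(3) v(1) i by simp
      then have "v$0 - alpha i * v$0 - alpha (pv n i) * v$0 = (1 - M) * v$0"
        unfolding cyc_mult[OF v(1) i] using const[OF i] const[OF nx_lt[OF i]] const[OF pv_lt[OF i]] by simp
      then have "(1 - alpha i - alpha (pv n i)) * v$0 = (1 - M) * v$0" by (simp add: algebra_simps)
      then have "1 - alpha i - alpha (pv n i) = 1 - M" using c0 by simp
      then show ?thesis by simp
    qed
    show "\<forall>i < n. alpha i = alpha ((i + 2) mod n)"
    proof (intro allI impI)
      fix i assume i: "i < n"
      have "alpha (nx n i) + alpha i = M" using sM[OF nx_lt[OF i]] pv_nx[OF i] by simp
      moreover have "alpha (nx n (nx n i)) + alpha (nx n i) = M"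
        using sM[OF nx_lt[OF nx_lt[OF i]]] pv_nx[OF nx_lt[OF i]] by simp
      moreover have "nx n (nx n i) = (i + 2) mod n" unfolding nx_def by (simp add: mod_Suc_eq)
      ultimately show "alpha i = alpha ((i + 2) mod n)" by simp
    qed
  next
    assume h: "\<forall>i < n. alpha i = alpha ((i + 2) mod n)"
    define s where "s i = alpha i + alpha (nx n i)" for i
    have sconst: "s i = s 0" if "i < n" for i
      using that
    proof (induction i)
      case (Suc i)
      have i: "i < n" using Suc.prems by simp
      have nxi: "nx n i = Suc i" using Suc.prems by (simp add: nx_eq)
      have "nx n (nx n i) = (i + 2) mod n" unfolding nx_def by (simp add: mod_Suc_eq)
      then have "alpha (nx n (Suc i)) = alpha ((i + 2) mod n)" using nxi by simp
      also have "\<dots> = alpha i" using h[rule_format, OF i] by (rule sym)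
      finally have "alpha (nx n (Suc i)) = alpha i" .
      then have "s (Suc i) = s i" unfolding s_def using nxi by simp
      then show ?case using Suc i by simp
    qed simp
    have Ms: "M = s 0"
    proof -
      obtain i where i: "i < n" "M = alpha i + alpha (nx n i)" using Mex by blast
      then have "M = s i" unfolding s_def by simp
      then show ?thesis using sconst[OF i(1)] by simp
    qed
    define one where "one = vec n (\<lambda>_. 1::real)"
    have one: "one \<in> carrier_vec n" unfolding one_def by simp
    have "?A *\<^sub>v one = (1 - M) \<cdot>\<^sub>v one"
    proof (rule eq_vecI)
      fix i assume "i < dim_vec ((1 - M) \<cdot>\<^sub>v one)"
      then have i: "i < n" unfolding one_def by simp
      have "s (pv n i) = alpha (pv n i) + alpha i" unfolding s_def using nx_pv[OF i] by simp
      then have "alpha i + alpha (pv n i) = M" using sconst[OF pv_lt[OF i]] Ms by simp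
      then show "(?A *\<^sub>v one) $ i = ((1 - M) \<cdot>\<^sub>v one) $ i"
        unfolding cyc_mult[OF one i] using i nx_lt[OF i] pv_lt[OF i] by (simp add: one_def algebra_simps)
    qed (use A one in simp)
    moreover have "one \<noteq> 0\<^sub>v n"
    proof
      assume "one = 0\<^sub>v n"
      then have "one $ 0 = 0" using n2 by simp
      then show False using n2 unfolding one_def by simp
    qed
    ultimately have "1 - M \<in> E" unfolding E_def eigenvalue_def eigenvector_def using one dimA by auto
    then have "lambda_min ?A \<le> 1 - M" unfolding lm using fin by simp
    with P1 show "lambda_min ?A = 1 - M" by simp
  qed
  have P4: "(\<forall>a b. n \<ge> 4 \<and> (\<forall>i < n - 1. alpha i = a) \<and> alpha (n - 1) = b \<longrightarrow>
          (\<forall>l::real. l \<le> 1 - 2 * a \<and> l < 1 - b \<and> a\<^sup>2 \<le> (1 - a - l) * (1 - b - l)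
               \<longrightarrow> lambda_min (cyc_mat n alpha) \<ge> l)
        \<and> (a < 1/2 \<and> b < 1 \<and> a\<^sup>2 < (1 - a) * (1 - b) \<longrightarrow> pos_def_mat (cyc_mat n alpha)))"
  proof (intro allI impI conjI)
    fix a b assume hyp: "n \<ge> 4 \<and> (\<forall>i < n - 1. alpha i = a) \<and> alpha (n - 1) = b"
    then have n4: "n \<ge> 4" and ha: "\<And>i. i < n - 1 \<Longrightarrow> alpha i = a" and hb: "alpha (n - 1) = b" by auto
    have a0: "a > 0" using ha[of 0] pos[of 0] n4 by simp
    have b0: "b > 0" using hb pos[of "n - 1"] n4 by simp
    {
      fix l :: real assume hl: "l \<le> 1 - 2 * a \<and> l < 1 - b \<and> a\<^sup>2 \<le> (1 - a - l) * (1 - b - l)"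
      show "lambda_min ?A \<ge> l"
        by (rule lm_ge, rule eig_ge[of n alpha], unfold E_def, simp,
            rule iii_bound[where n=n and alpha=alpha and a=a and b=b, OF n4 ha hb a0 b0], use hl in auto)
    }
    {
      assume hp: "a < 1/2 \<and> b < 1 \<and> a\<^sup>2 < (1 - a) * (1 - b)"
      define q where "q = ((1 - a) * (1 - b) - a^2) / (2 - a - b)"
      define l where "l = min (1 - 2 * a) q"
      have d0: "2 - a - b > 0" using hp by simp
      have q0: "q > 0" unfolding q_def using hp d0 by simp
      have l0: "l > 0" unfolding l_def using q0 hp by simp
      have l1: "l \<le> 1 - 2 * a" unfolding l_def by simp
      have "l * (2 - a - b) \<le> q * (2 - a - b)" using d0 unfolding l_def by (simp add: mult_right_mono)
      also have "\<dots> = (1 - a) * (1 - b) - a^2" unfolding q_def using d0 by simp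
      finally have lq: "l * (2 - a - b) \<le> (1 - a) * (1 - b) - a^2" .
      have "(1 - a - l) * (1 - b - l) = (1 - a) * (1 - b) - l * (2 - a - b) + l^2"
        by (simp add: algebra_simps power2_eq_square)
      also have "\<dots> \<ge> a^2" using lq by (simp add: add_increasing2)
      finally have l2: "a^2 \<le> (1 - a - l) * (1 - b - l)" .
      show "pos_def_mat ?A"
        by (rule posdef[OF l0], rule iii_bound[where n=n and alpha=alpha and a=a and b=b, OF n4 ha hb a0 b0 l1 l2])
    }
  qed
  show ?thesis using P1 P2 P3 P4 by blast
qed

end
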